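(* Let $G=(V,E)$ be a finite simple graph on $n$ vertices with no isolated vertex. Let $G'$ be any graph with vertex set $V$ obtained as follows: for each vertex $v\in V$, if $\deg_G(v)\ge 2$, choose two distinct neighbors $u,w$ of $v$ in $G$ (arbitrarily) and put the edge $uw$ into $G'$; if $\deg_G(v)=1$, put a loop on the unique neighbor of $v$ into $G'$ (an edge already present is not duplicated). Then $$\gamma_t(G)\le n-\alpha(G')=\beta(G').$$
   Context: A set $S\subseteq V$ is a total dominating set of $G$ if every vertex $v\in V$ has a neighbor in $S$; $\gamma_t(G)$ is the minimum size of a total dominating set of $G$. For a graph $H$ possibly with loops, an independent set is a set of vertices containing no two endpoints of an edge and no vertex carrying a loop, and $\alpha(H)$ is the maximum size of an independent set; a vertex cover is a set of vertices meeting every edge (so it contains every vertex carrying a loop), and $\beta(H)$ is the minimum size of a vertex cover. *)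

theory Defs
  imports Main
begin

definition simple_graph :: "'a set \<Rightarrow> ('a \<Rightarrow> 'a \<Rightarrow> bool) \<Rightarrow> bool" where
  "simple_graph V E \<longleftrightarrow> finite V \<and> (\<forall>u v. E u v \<longrightarrow> u \<in> V \<and> v \<in> V)
     \<and> (\<forall>u v. E u v \<longrightarrow> E v u) \<and> (\<forall>v. \<not> E v v)"

definition neighbors :: "'a set \<Rightarrow> ('a \<Rightarrow> 'a \<Rightarrow> bool) \<Rightarrow> 'a \<Rightarrow> 'a set" where
  "neighbors V E v = {u \<in> V. E v u}"

definition degree :: "'a set \<Rightarrow> ('a \<Rightarrow> 'a \<Rightarrow> bool) \<Rightarrow> 'a \<Rightarrow> nat" where
  "degree V E v = card (neighbors V E v)"

definition total_dominating_set :: "'a set \<Rightarrow> ('a \<Rightarrow> 'a \<Rightarrow> bool) \<Rightarrow> 'a set \<Rightarrow> bool" where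
  "total_dominating_set V E S \<longleftrightarrow> S \<subseteq> V \<and> (\<forall>v\<in>V. \<exists>u\<in>S. E v u)"

definition gamma_t :: "'a set \<Rightarrow> ('a \<Rightarrow> 'a \<Rightarrow> bool) \<Rightarrow> nat" where
  "gamma_t V E = Min {card S | S. total_dominating_set V E S}"

(* Graphs possibly with loops: vertex set V and a set F of edges, each edge being
   a set {u,w} (a loop on u is the singleton {u}). *)
definition independent_set :: "'a set \<Rightarrow> 'a set set \<Rightarrow> 'a set \<Rightarrow> bool" where
  "independent_set V F S \<longleftrightarrow> S \<subseteq> V \<and> (\<forall>e\<in>F. \<not> e \<subseteq> S)"

definition alpha :: "'a set \<Rightarrow> 'a set set \<Rightarrow> nat" where
  "alpha V F = Max {card S | S. independent_set V F S}"

definition vertex_cover :: "'a set \<Rightarrow> 'a set set \<Rightarrow> 'a set \<Rightarrow> bool" where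
  "vertex_cover V F C \<longleftrightarrow> C \<subseteq> V \<and> (\<forall>e\<in>F. e \<inter> C \<noteq> {})"

definition beta :: "'a set \<Rightarrow> 'a set set \<Rightarrow> nat" where
  "beta V F = Min {card C | C. vertex_cover V F C}"

end

theory Submission
  imports Defs
begin

theorem lemma2p1:
  fixes V :: "'a set" and E :: "'a \<Rightarrow> 'a \<Rightarrow> bool" and f :: "'a \<Rightarrow> 'a \<times> 'a"
  assumes "simple_graph V E"
    and "\<forall>v\<in>V. \<exists>u. E v u"
    and "\<forall>v\<in>V. degree V E v \<ge> 2 \<longrightarrow>
           fst (f v) \<noteq> snd (f v) \<and> E v (fst (f v)) \<and> E v (snd (f v))"
    and "\<forall>v\<in>V. degree V E v = 1 \<longrightarrow> E v (fst (f v)) \<and> snd (f v) = fst (f v)"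
  shows "gamma_t V E \<le> card V - alpha V ((\<lambda>v. {fst (f v), snd (f v)}) ` V)
       \<and> card V - alpha V ((\<lambda>v. {fst (f v), snd (f v)}) ` V) = beta V ((\<lambda>v. {fst (f v), snd (f v)}) ` V)"
proof -
  define F where "F = (\<lambda>v. {fst (f v), snd (f v)}) ` V"
  have fin: "finite V" using assms(1) unfolding simple_graph_def by auto
  have Ein: "\<And>u v. E u v \<Longrightarrow> u \<in> V \<and> v \<in> V" using assms(1) unfolding simple_graph_def by auto
  have nb: "E v (fst (f v)) \<and> E v (snd (f v))" if vV: "v \<in> V" for v
  proof -
    obtain u where "E v u" using assms(2) vV by blast
    then have "u \<in> neighbors V E v" using Ein unfolding neighbors_def by auto
    moreover have "finite (neighbors V E v)" using fin unfolding neighbors_def by auto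
    ultimately have "degree V E v \<ge> 1" unfolding degree_def
      by (metis One_nat_def Suc_leI card_gt_0_iff empty_iff)
    then have "degree V E v \<ge> 2 \<or> degree V E v = 1" by auto
    then show ?thesis using assms(3,4) vV by auto
  qed
  have Fsub: "e \<subseteq> V" "e \<noteq> {}" if "e \<in> F" for e
    using that nb Ein unfolding F_def by auto
  define IS where "IS = {card S | S. independent_set V F S}"
  define VC where "VC = {card C | C. vertex_cover V F C}"
  define TD where "TD = {card S | S. total_dominating_set V E S}"
  have finIS: "finite IS"
  proof -
    have "IS \<subseteq> {..card V}"
    proof
      fix x assume "x \<in> IS"
      then obtain S where "x = card S" "S \<subseteq> V" unfolding IS_def independent_set_def by blast
      then show "x \<in> {..card V}" using fin card_mono by auto
    qed
    then show ?thesis using finite_subset by blast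
  qed
  have finVC: "finite VC"
  proof -
    have "VC \<subseteq> {..card V}"
    proof
      fix x assume "x \<in> VC"
      then obtain S where "x = card S" "S \<subseteq> V" unfolding VC_def vertex_cover_def by blast
      then show "x \<in> {..card V}" using fin card_mono by auto
    qed
    then show ?thesis using finite_subset by blast
  qed
  have finTD: "finite TD"
  proof -
    have "TD \<subseteq> {..card V}"
    proof
      fix x assume "x \<in> TD"
      then obtain S where "x = card S" "S \<subseteq> V" unfolding TD_def total_dominating_set_def by blast
      then show "x \<in> {..card V}" using fin card_mono by auto
    qed
    then show ?thesis using finite_subset by blast
  qed
  have "independent_set V F {}" unfolding independent_set_def using Fsub by auto
  then have "IS \<noteq> {}" unfolding IS_def by auto
  then have "alpha V F \<in> IS" unfolding alpha_def IS_def[symmetric] using finIS Max_in by blast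
  then obtain S0 where S0: "independent_set V F S0" "card S0 = alpha V F" unfolding IS_def by auto
  have "vertex_cover V F V" unfolding vertex_cover_def using Fsub by blast
  then have "VC \<noteq> {}" unfolding VC_def by auto
  then have "beta V F \<in> VC" unfolding beta_def VC_def[symmetric] using finVC Min_in by blast
  then obtain C0 where C0: "vertex_cover V F C0" "card C0 = beta V F" unfolding VC_def by auto
  have "vertex_cover V F (V - S0)" using S0(1) Fsub unfolding vertex_cover_def independent_set_def
    by blast
  then have "card (V - S0) \<in> VC" unfolding VC_def by auto
  then have "beta V F \<le> card (V - S0)" unfolding beta_def VC_def[symmetric] using finVC by auto
  moreover have "card (V - S0) = card V - alpha V F"
    using S0 fin unfolding independent_set_def by (metis card_Diff_subset finite_subset)
  ultimately have b1: "beta V F \<le> card V - alpha V F" by simp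
  have "independent_set V F (V - C0)" using C0(1) Fsub unfolding vertex_cover_def independent_set_def
    by blast
  then have "card (V - C0) \<in> IS" unfolding IS_def by auto
  then have "card (V - C0) \<le> alpha V F" unfolding alpha_def IS_def[symmetric] using finIS by auto
  moreover have "card (V - C0) = card V - beta V F"
    using C0 fin unfolding vertex_cover_def by (metis card_Diff_subset finite_subset)
  moreover have "beta V F \<le> card V" using C0 fin unfolding vertex_cover_def by (metis card_mono)
  ultimately have b2: "card V - alpha V F \<le> beta V F" by linarith
  have "total_dominating_set V E C0"
    unfolding total_dominating_set_def
  proof (intro conjI ballI)
    show "C0 \<subseteq> V" using C0 unfolding vertex_cover_def by auto
  next
    fix v assume "v \<in> V"
    then have "{fst (f v), snd (f v)} \<in> F" unfolding F_def by auto
    then have "{fst (f v), snd (f v)} \<inter> C0 \<noteq> {}" using C0 unfolding vertex_cover_def by auto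
    then show "\<exists>u\<in>C0. E v u" using nb[OF \<open>v \<in> V\<close>] by auto
  qed
  then have "card C0 \<in> TD" unfolding TD_def by auto
  then have "gamma_t V E \<le> beta V F" unfolding gamma_t_def TD_def[symmetric] using finTD C0 by auto
  then show ?thesis using b1 b2 unfolding F_def by auto
qed

end
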